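(* Let $A$ be a finite set of alternatives with $|A|\ge 3$ and let $\mathbb{D}$ be a minimally rich domain of linear orders over $A$ that is connected with two distinct neighbours. If $f:\mathbb{D}^2\to A$ (two voters) is unanimous and strategy-proof, then $f$ satisfies dictatorship.
   Context: A domain is a set $\mathbb{D}$ of linear orders (strict preferences) over $A$; a profile for voters $\{1,2\}$ is $(P_1,P_2)\in\mathbb{D}^2$. For a linear order $P_i$, $r_k(P_i)$ is its $k$-th ranked alternative. $\mathbb{D}$ is minimally rich if every $a\in A$ is ranked first in some $P_i\in\mathbb{D}$. Two linear orders $P_i,P_i'$ are adjacent if $P_i'$ is obtained from $P_i$ by swapping two consecutively ranked alternatives and leaving all other ranks unchanged. A social choice function $f:\mathbb{D}^2\to A$ is unanimous if $f(P)=a$ whenever both voters rank $a$ first; strategy-proof if there is no voter $i$, profile $P$ and $P_i'\in\mathbb{D}$ with $f(P_i',P_{-i})\,P_i\,f(P_i,P_{-i})$; and satisfies dictatorship if there is a voter $i$ with $f(P)=r_1(P_i)$ for all $P\in\mathbb{D}^2$. A path in $\mathbb{D}$ is a sequence of distinct preferences in $\mathbb{D}$ in which consecutive ones are adjacent; $\mathbb{D}$ is connected if any two of its preferences are joined by a path in $\mathbb{D}$. For $\bar{\mathbb{D}}\subseteq\mathbb{D}$, a neighbour of $\bar{\mathbb{D}}$ in $\mathbb{D}$ is a $P_i\in\mathbb{D}\setminus\bar{\mathbb{D}}$ adjacent to some element of $\bar{\mathbb{D}}$. Two preferences $P_i,P_i'\in\mathbb{D}$ are top-connected in $\mathbb{D}$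 if there is a path from $P_i$ to $P_i'$ in $\mathbb{D}$ all of whose members have the same top-ranked alternative. The top-connected closure $\mathbb{D}^{TCC}(P_i)$ is the set of preferences in $\mathbb{D}$ top-connected to $P_i$, together with $P_i$. $\mathbb{D}$ is connected with two distinct neighbours if (1) $\mathbb{D}$ is connected, and (2) for every $P_i\in\mathbb{D}$ there exist two neighbours $P_i',P_i''$ of $\mathbb{D}^{TCC}(P_i)$ in $\mathbb{D}$ with $r_1(P_i')\ne r_1(P_i'')$. *)

theory Defs
  imports Main
begin

text \<open>A linear order (strict preference) over A is represented as a list enumerating
  A without repetition, from best to worst: the k-th ranked alternative r_k(P) is P ! (k-1).\<close>

definition linorder_on :: "'a set \<Rightarrow> 'a list \<Rightarrow> bool" where
  "linorder_on A P \<longleftrightarrow> distinct P \<and> set P = A"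

definition rtop :: "'a list \<Rightarrow> 'a" where
  "rtop P = hd P"

definition prefers :: "'a list \<Rightarrow> 'a \<Rightarrow> 'a \<Rightarrow> bool" where
  "prefers P a b \<longleftrightarrow> (\<exists>i j. i < j \<and> j < length P \<and> P ! i = a \<and> P ! j = b)"

definition domain :: "'a set \<Rightarrow> 'a list set \<Rightarrow> bool" where
  "domain A D \<longleftrightarrow> D \<noteq> {} \<and> (\<forall>P\<in>D. linorder_on A P)"

definition minimally_rich :: "'a set \<Rightarrow> 'a list set \<Rightarrow> bool" where
  "minimally_rich A D \<longleftrightarrow> (\<forall>a\<in>A. \<exists>P\<in>D. rtop P = a)"

definition adjacent :: "'a list \<Rightarrow> 'a list \<Rightarrow> bool" where
  "adjacent P P' \<longleftrightarrow> (\<exists>k. Suc k < length P \<and> P' = P[k := P ! Suc k, Suc k := P ! k])"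

definition is_path :: "'a list set \<Rightarrow> 'a list list \<Rightarrow> bool" where
  "is_path D ps \<longleftrightarrow> ps \<noteq> [] \<and> distinct ps \<and> set ps \<subseteq> D \<and>
     (\<forall>i. Suc i < length ps \<longrightarrow> adjacent (ps ! i) (ps ! Suc i))"

definition connected_dom :: "'a list set \<Rightarrow> bool" where
  "connected_dom D \<longleftrightarrow> (\<forall>P\<in>D. \<forall>P'\<in>D. \<exists>ps. is_path D ps \<and> hd ps = P \<and> last ps = P')"

definition top_connected :: "'a list set \<Rightarrow> 'a list \<Rightarrow> 'a list \<Rightarrow> bool" where
  "top_connected D P P' \<longleftrightarrow> (\<exists>ps. is_path D ps \<and> hd ps = P \<and> last ps = P' \<and>
     (\<forall>Q\<in>set ps. rtop Q = rtop P))"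

definition TCC :: "'a list set \<Rightarrow> 'a list \<Rightarrow> 'a list set" where
  "TCC D P = {P' \<in> D. top_connected D P P'} \<union> {P}"

definition neighbour :: "'a list set \<Rightarrow> 'a list set \<Rightarrow> 'a list \<Rightarrow> bool" where
  "neighbour D S P' \<longleftrightarrow> P' \<in> D - S \<and> (\<exists>Q\<in>S. adjacent Q P')"

definition connected_two_neighbours :: "'a list set \<Rightarrow> bool" where
  "connected_two_neighbours D \<longleftrightarrow> connected_dom D \<and>
     (\<forall>P\<in>D. \<exists>P' P''. neighbour D (TCC D P) P' \<and> neighbour D (TCC D P) P'' \<and> rtop P' \<noteq> rtop P'')"

definition unanimous :: "'a list set \<Rightarrow> ('a list \<Rightarrow> 'a list \<Rightarrow> 'a) \<Rightarrow> bool" where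
  "unanimous D f \<longleftrightarrow> (\<forall>P1\<in>D. \<forall>P2\<in>D. \<forall>a. rtop P1 = a \<and> rtop P2 = a \<longrightarrow> f P1 P2 = a)"

definition strategy_proof :: "'a list set \<Rightarrow> ('a list \<Rightarrow> 'a list \<Rightarrow> 'a) \<Rightarrow> bool" where
  "strategy_proof D f \<longleftrightarrow>
     (\<forall>P1\<in>D. \<forall>P2\<in>D. \<forall>Q\<in>D.
        \<not> prefers P1 (f Q P2) (f P1 P2) \<and> \<not> prefers P2 (f P1 Q) (f P1 P2))"

definition dictatorship :: "'a list set \<Rightarrow> ('a list \<Rightarrow> 'a list \<Rightarrow> 'a) \<Rightarrow> bool" where
  "dictatorship D f \<longleftrightarrow> (\<forall>P1\<in>D. \<forall>P2\<in>D. f P1 P2 = rtop P1) \<or> (\<forall>P1\<in>D. \<forall>P2\<in>D. f P1 P2 = rtop P2)"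

end

theory Submission
  imports Defs
begin

lemma prefers_Nil[simp]: "\<not> prefers [] u v" by (simp add: prefers_def)

lemma rtop_Cons[simp]: "rtop (a # L) = a" by (simp add: rtop_def)

lemma prefers_Cons: "prefers (a # L) u v \<longleftrightarrow> (u = a \<and> v \<in> set L) \<or> prefers L u v"
proof
  assume "prefers (a # L) u v"
  then obtain i j where ij: "i < j" "j < length (a#L)" "(a#L)!i = u" "(a#L)!j = v"
    by (auto simp: prefers_def)
  show "(u = a \<and> v \<in> set L) \<or> prefers L u v"
  proof (cases i)
    case 0
    obtain j' where j: "j = Suc j'" using ij(1) by (cases j) auto
    then show ?thesis using ij 0 by auto
  next
    case (Suc i')
    obtain j' where j: "j = Suc j'" using ij(1) by (cases j) auto
    then have "prefers L u v" using ij Suc unfolding prefers_def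
      by (intro exI[of _ i'] exI[of _ j']) auto
    then show ?thesis by simp
  qed
next
  assume "(u = a \<and> v \<in> set L) \<or> prefers L u v"
  then show "prefers (a#L) u v"
  proof
    assume h: "u = a \<and> v \<in> set L"
    then obtain k where "k < length L" "L!k = v" by (auto simp: in_set_conv_nth)
    then show ?thesis unfolding prefers_def using h
      by (intro exI[of _ 0] exI[of _ "Suc k"]) auto
  next
    assume "prefers L u v"
    then obtain i j where "i < j" "j < length L" "L!i = u" "L!j = v" by (auto simp: prefers_def)
    then show ?thesis unfolding prefers_def by (intro exI[of _ "Suc i"] exI[of _ "Suc j"]) auto
  qed
qed

lemma prefers_set: "prefers L u v \<Longrightarrow> u \<in> set L \<and> v \<in> set L"
  by (induction L) (auto simp: prefers_Cons)

lemma prefers_asym: "distinct L \<Longrightarrow> prefers L u v \<Longrightarrow> \<not> prefers L v u"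
  by (induction L) (auto simp: prefers_Cons dest: prefers_set)

lemma prefers_total: "u \<in> set L \<Longrightarrow> v \<in> set L \<Longrightarrow> u \<noteq> v \<Longrightarrow> prefers L u v \<or> prefers L v u"
  by (induction L) (auto simp: prefers_Cons)

definition edge :: "'a list set \<Rightarrow> 'a \<Rightarrow> 'a \<Rightarrow> bool" where
  "edge D a b \<longleftrightarrow> (\<exists>r. a#b#r \<in> D \<and> b#a#r \<in> D)"

definition W1 :: "'a list set \<Rightarrow> ('a list \<Rightarrow> 'a list \<Rightarrow> 'a) \<Rightarrow> 'a \<Rightarrow> 'a \<Rightarrow> bool" where
  "W1 D f a b \<longleftrightarrow> (\<forall>W\<in>D. \<forall>T\<in>D. rtop W = a \<longrightarrow> rtop T = b \<longrightarrow> f W T = a)"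

definition W2 :: "'a list set \<Rightarrow> ('a list \<Rightarrow> 'a list \<Rightarrow> 'a) \<Rightarrow> 'a \<Rightarrow> 'a \<Rightarrow> bool" where
  "W2 D f a b \<longleftrightarrow> (\<forall>W\<in>D. \<forall>T\<in>D. rtop W = a \<longrightarrow> rtop T = b \<longrightarrow> f W T = b)"

definition le1 :: "'a list set \<Rightarrow> ('a list \<Rightarrow> 'a list \<Rightarrow> 'a) \<Rightarrow> 'a \<Rightarrow> 'a \<Rightarrow> bool" where
  "le1 D f c y \<longleftrightarrow> (\<forall>T\<in>D. (\<exists>W\<in>D. f W T = c) \<longrightarrow> (\<exists>W\<in>D. f W T = y))"

lemma edge_sym: "edge D a b \<Longrightarrow> edge D b a"
  unfolding edge_def by blast

lemma adj_cases:
  assumes "adjacent M N"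
  shows "rtop N = rtop M \<or> (\<exists>a b r. M = a#b#r \<and> N = b#a#r)"
proof -
  obtain k where k: "Suc k < length M" "N = M[k := M ! Suc k, Suc k := M ! k]"
    using assms by (auto simp: adjacent_def)
  obtain a M' where M: "M = a # M'" using k(1) by (cases M) auto
  show ?thesis
  proof (cases k)
    case 0
    obtain b r where "M' = b # r" using k(1) M 0 by (cases M') auto
    then show ?thesis using k M 0 by auto
  next
    case (Suc k')
    then show ?thesis using k M by (simp add: rtop_def)
  qed
qed


locale tv =
  fixes A :: "'a set" and D :: "'a list set" and f :: "'a list \<Rightarrow> 'a list \<Rightarrow> 'a"
  assumes dom: "domain A D" and mr: "minimally_rich A D" and ctn: "connected_two_neighbours D"
    and fin: "finite A" and ne: "A \<noteq> {}"
    and rng: "\<forall>P1\<in>D. \<forall>P2\<in>D. f P1 P2 \<in> A" and un: "unanimous D f" and sp: "strategy_proof D f"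
begin

lemma inD: "P \<in> D \<Longrightarrow> distinct P" "P \<in> D \<Longrightarrow> set P = A"
  using dom by (auto simp: domain_def linorder_on_def)

lemma ex_pref: "a \<in> A \<Longrightarrow> \<exists>P\<in>D. rtop P = a"
  using mr by (auto simp: minimally_rich_def)

lemma edge_in: "edge D a b \<Longrightarrow> a \<in> A \<and> b \<in> A \<and> a \<noteq> b"
  unfolding edge_def using inD by fastforce

lemma rtop_in: "P \<in> D \<Longrightarrow> rtop P \<in> A"
  using inD[of P] ne by (cases P) auto

lemma top_pref: "P \<in> D \<Longrightarrow> x \<in> A \<Longrightarrow> x \<noteq> rtop P \<Longrightarrow> prefers P (rtop P) x"
  using inD[of P] ne by (cases P) (auto simp: prefers_Cons)

lemma f_in: "W \<in> D \<Longrightarrow> T \<in> D \<Longrightarrow> f W T \<in> A"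
  using rng by auto

lemma spv1: "P1\<in>D \<Longrightarrow> P2\<in>D \<Longrightarrow> Q\<in>D \<Longrightarrow> \<not> prefers P1 (f Q P2) (f P1 P2)"
  using sp by (auto simp: strategy_proof_def)

lemma spv2: "P1\<in>D \<Longrightarrow> P2\<in>D \<Longrightarrow> Q\<in>D \<Longrightarrow> \<not> prefers P2 (f P1 Q) (f P1 P2)"
  using sp by (auto simp: strategy_proof_def)

lemma unan: "P1 \<in> D \<Longrightarrow> P2 \<in> D \<Longrightarrow> rtop P1 = rtop P2 \<Longrightarrow> f P1 P2 = rtop P2"
  using un by (auto simp: unanimous_def)

lemma os1: assumes "W\<in>D" "T\<in>D" "W'\<in>D" "f W' T = rtop W" shows "f W T = rtop W"
proof (rule ccontr)
  assume "f W T \<noteq> rtop W"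
  then have "prefers W (rtop W) (f W T)" using top_pref f_in assms by auto
  then show False using spv1[of W T W'] assms by simp
qed

lemma os2: assumes "W\<in>D" "T\<in>D" "T'\<in>D" "f W T' = rtop T" shows "f W T = rtop T"
proof (rule ccontr)
  assume "f W T \<noteq> rtop T"
  then have "prefers T (rtop T) (f W T)" using top_pref f_in assms by auto
  then show False using spv2[of W T T'] assms by simp
qed

lemma tg1: "W\<in>D \<Longrightarrow> T\<in>D \<Longrightarrow> \<not> prefers W (rtop T) (f W T)"
  using spv1[of W T T] unan[of T T] by simp

lemma tg2: "W\<in>D \<Longrightarrow> T\<in>D \<Longrightarrow> \<not> prefers T (rtop W) (f W T)"
  using spv2[of W T W] unan[of W W] by simp

lemma second_pref: "a#b#r \<in> D \<Longrightarrow> x \<in> A \<Longrightarrow> x \<noteq> a \<Longrightarrow> x \<noteq> b \<Longrightarrow> prefers (a#b#r) b x"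
  using inD[of "a#b#r"] by (auto simp: prefers_Cons)

lemma dich:
  assumes ab: "a#b#r \<in> D" and ba: "b#a#r \<in> D" and W: "W\<in>D" and T: "T\<in>D"
    and tW: "rtop W = a" and tT: "rtop T = b"
  shows "f W T = a \<or> f W T = b"
proof (rule ccontr)
  assume nab: "\<not> (f W T = a \<or> f W T = b)"
  have 1: "f (a#b#r) T = a \<or> f (a#b#r) T = b"
    using tg1[OF ab T] second_pref[OF ab f_in[OF ab T]] tT by blast
  have 2: "f W (b#a#r) = a \<or> f W (b#a#r) = b"
    using tg2[OF W ba] second_pref[OF ba f_in[OF W ba]] tW by blast
  have 3: "f (a#b#r) T \<noteq> a"
    using os1[OF W T ab] tW nab by auto
  have 4: "f W (b#a#r) \<noteq> b"
    using os2[OF W T ba] tT nab by auto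
  have 5: "f (a#b#r) (b#a#r) = a \<or> f (a#b#r) (b#a#r) = b"
    using tg1[OF ab ba] second_pref[OF ab f_in[OF ab ba]] by auto
  have p1: "prefers (b#a#r) b a" by (simp add: prefers_Cons)
  have p2: "prefers (a#b#r) a b" by (simp add: prefers_Cons)
  show False
  proof (cases "f (a#b#r) (b#a#r) = a")
    case True
    then show False using spv2[OF ab ba T] 1 3 p1 by simp
  next
    case False
    then show False using spv1[OF ab ba W] 2 4 5 p2 by simp
  qed
qed

lemma W12:
  assumes ab: "a#b#r \<in> D" and ba: "b#a#r \<in> D"
  shows "W1 D f a b \<or> W2 D f a b"
proof (cases "f (a#b#r) (b#a#r) = a")
  case True
  have "W1 D f a b" unfolding W1_def
  proof (intro ballI impI)
    fix W T assume W: "W\<in>D" and T: "T\<in>D" and tW: "rtop W = a" and tT: "rtop T = b"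
    have x: "f W (b#a#r) = a" using os1[OF W ba ab] True tW by simp
    show "f W T = a"
    proof (rule ccontr)
      assume "f W T \<noteq> a"
      then have "f W T = b" using dich[OF ab ba W T tW tT] by simp
      then have "f W (b#a#r) = b" using os2[OF W ba T] tT by simp
      then show False using x inD[OF ab] by auto
    qed
  qed
  then show ?thesis ..
next
  case False
  then have fb: "f (a#b#r) (b#a#r) = b" using dich[OF ab ba ab ba] by simp
  have "W2 D f a b" unfolding W2_def
  proof (intro ballI impI)
    fix W T assume W: "W\<in>D" and T: "T\<in>D" and tW: "rtop W = a" and tT: "rtop T = b"
    have x: "f (a#b#r) T = b" using os2[OF ab T ba] fb tT by simp
    show "f W T = b"
    proof (rule ccontr)
      assume "f W T \<noteq> b"
      then have "f W T = a" using dich[OF ab ba W T tW tT] by simp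
      then have "f (a#b#r) T = a" using os1[OF ab T W] tW by simp
      then show False using x inD[OF ab] by auto
    qed
  qed
  then show ?thesis ..
qed

lemma lemG:
  assumes Q: "y#c#r \<in> D" and S: "c#y#r \<in> D" and w: "W1 D f y c"
  shows "le1 D f c y"
  unfolding le1_def
proof (intro ballI impI)
  fix T assume T: "T \<in> D" and "\<exists>W\<in>D. f W T = c"
  then obtain W where W: "W \<in> D" "f W T = c" by blast
  have fQS: "f (y#c#r) (c#y#r) = y" using w Q S by (auto simp: W1_def)
  have nc: "f (y#c#r) T0 \<noteq> c" if T0: "T0 \<in> D" for T0
  proof
    assume "f (y#c#r) T0 = c"
    then show False using spv2[OF Q S T0] fQS by (simp add: prefers_Cons)
  qed
  have "\<not> prefers (y#c#r) c (f (y#c#r) T)" using spv1[OF Q T W(1)] W(2) by simp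
  moreover have "f (y#c#r) T \<in> A" using f_in[OF Q T] .
  ultimately have "f (y#c#r) T = y \<or> f (y#c#r) T = c"
    using inD[OF Q] by (auto simp: prefers_Cons)
  then have "f (y#c#r) T = y" using nc[OF T] by simp
  then show "\<exists>W\<in>D. f W T = y" using Q by blast
qed

lemma swap_same:
  assumes S: "c#y#r \<in> D" and Q: "y#c#r \<in> D" and T: "T \<in> D"
    and z: "f (c#y#r) T \<noteq> c" "f (c#y#r) T \<noteq> y"
  shows "f (y#c#r) T = f (c#y#r) T"
proof (rule ccontr)
  let ?x = "f (y#c#r) T" and ?z = "f (c#y#r) T"
  assume nxz: "?x \<noteq> ?z"
  have a1: "\<not> prefers (c#y#r) ?x ?z" using spv1[OF S T Q] .
  have a2: "\<not> prefers (y#c#r) ?z ?x" using spv1[OF Q T S] .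
  have zr: "?z \<in> set r" using f_in[OF S T] inD[OF S] z by auto
  have xA: "?x \<in> set (c#y#r)" using f_in[OF Q T] inD[OF S] by auto
  show False
  proof (cases "?x = c \<or> ?x = y")
    case True
    then show False using a1 zr by (auto simp: prefers_Cons)
  next
    case False
    then have "?x \<in> set r" using xA by auto
    then have "prefers r ?x ?z \<or> prefers r ?z ?x" using prefers_total zr nxz by metis
    then show False using a1 a2 by (auto simp: prefers_Cons)
  qed
qed

lemma E1:
  assumes Q: "y#c#r \<in> D" and S: "c#y#r \<in> D" and Ts: "c#d#r' \<in> D" and yd: "y \<noteq> d"
    and w2: "W2 D f c d"
  shows "\<not> W1 D f y c"
proof
  assume w1: "W1 D f y c"
  have dA: "d \<in> A" using inD[OF Ts] by auto
  obtain T where T: "T \<in> D" "rtop T = d" using ex_pref[OF dA] by blast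
  have fST: "f (c#y#r) T = d" using w2 S T by (auto simp: W2_def)
  have cd: "c \<noteq> d" using inD[OF Ts] by auto
  have yc: "y \<noteq> c" using inD[OF Q] by auto
  have fQT: "f (y#c#r) T = d" using swap_same[OF S Q T(1)] fST cd yd by auto
  have fQTs: "f (y#c#r) (c#d#r') = y" using w1 Q Ts by (auto simp: W1_def)
  have "y \<in> set r'" using inD[OF Ts] inD[OF Q] yd yc by auto
  then have "prefers (c#d#r') d y" by (simp add: prefers_Cons)
  then show False using spv2[OF Q Ts T(1)] fQT fQTs by simp
qed

end


context tv
begin

lemma TCC_sub:
  assumes P: "P \<in> D" and Q: "Q \<in> TCC D P" shows "Q \<in> D \<and> rtop Q = rtop P"
proof (cases "Q = P")
  case True then show ?thesis using P by simp
next
  case False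
  then have QD: "Q \<in> D" and tc: "top_connected D P Q" using Q by (auto simp: TCC_def)
  then obtain ps where ps: "is_path D ps" "last ps = Q" "\<forall>Q'\<in>set ps. rtop Q' = rtop P"
    unfolding top_connected_def by blast
  have "ps \<noteq> []" using ps(1) unfolding is_path_def by blast
  then have "Q \<in> set ps" using ps(2) last_in_set by metis
  then show ?thesis using ps(3) QD by blast
qed

lemma TCC_ext:
  assumes P: "P \<in> D" and M: "M \<in> TCC D P" and N: "N \<in> D" and adj: "adjacent M N"
    and tN: "rtop N = rtop P"
  shows "N \<in> TCC D P"
proof (cases "N = P")
  case True then show ?thesis by (simp add: TCC_def)
next
  case NP: False
  have "top_connected D P N"
  proof (cases "M = P")
    case True
    have "is_path D [P, N]" using P N NP adj True
      by (auto simp: is_path_def less_Suc_eq)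
    then show ?thesis unfolding top_connected_def using tN
      by (intro exI[of _ "[P,N]"]) auto
  next
    case False
    then obtain ps where ps: "is_path D ps" "hd ps = P" "last ps = M" "\<forall>Q\<in>set ps. rtop Q = rtop P"
      using M by (auto simp: TCC_def top_connected_def)
    have ne: "ps \<noteq> []" using ps(1) by (simp add: is_path_def)
    show ?thesis
    proof (cases "N \<in> set ps")
      case True
      then obtain k where k: "k < length ps" "ps ! k = N" by (auto simp: in_set_conv_nth)
      let ?qs = "take (Suc k) ps"
      have "is_path D ?qs" using ps(1) k unfolding is_path_def
        by (auto dest: in_set_takeD)
      moreover have "hd ?qs = P" using ps(2) ne by simp
      moreover have "last ?qs = N"
      proof -
        have len: "length ?qs = Suc k" using k(1) by simp
        then have "?qs \<noteq> []" by auto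
        then have "last ?qs = ?qs ! (length ?qs - 1)" by (rule last_conv_nth)
        then show ?thesis using len k by simp
      qed
      moreover have "\<forall>Q\<in>set ?qs. rtop Q = rtop P" using ps(4) by (auto dest: in_set_takeD)
      ultimately show ?thesis unfolding top_connected_def by blast
    next
      case False
      let ?qs = "ps @ [N]"
      have "is_path D ?qs" unfolding is_path_def
      proof (intro conjI allI impI)
        show "?qs \<noteq> []" by simp
        show "distinct ?qs" using ps(1) False by (simp add: is_path_def)
        show "set ?qs \<subseteq> D" using ps(1) N by (simp add: is_path_def)
        fix i assume i: "Suc i < length ?qs"
        show "adjacent (?qs ! i) (?qs ! Suc i)"
        proof (cases "Suc i < length ps")
          case True
          then show ?thesis using ps(1) by (simp add: is_path_def nth_append)
        next
          case False
          then have "Suc i = length ps" using i by simp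
          then have i_eq: "i = length ps - 1" by simp
          have "?qs ! i = ps ! i" using \<open>Suc i = length ps\<close> by (simp add: nth_append)
          also have "\<dots> = M" using ps(3) ne i_eq by (simp add: last_conv_nth)
          finally have "?qs ! i = M" .
          moreover have "?qs ! Suc i = N" using \<open>Suc i = length ps\<close> by (simp add: nth_append)
          ultimately have "?qs ! i = M" "?qs ! Suc i = N" by auto
          then show ?thesis using adj by simp
        qed
      qed
      moreover have "hd ?qs = P" using ps(2) ne by simp
      moreover have "last ?qs = N" by simp
      moreover have "\<forall>Q\<in>set ?qs. rtop Q = rtop P" using ps(4) tN by auto
      ultimately show ?thesis unfolding top_connected_def by blast
    qed
  qed
  then show ?thesis using N by (simp add: TCC_def)
qed

lemma nb_edge:
  assumes P: "P \<in> D" and nb: "neighbour D (TCC D P) N"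
  shows "edge D (rtop P) (rtop N)"
proof -
  obtain M where M: "M \<in> TCC D P" "adjacent M N" and N: "N \<in> D" "N \<notin> TCC D P"
    using nb by (auto simp: neighbour_def)
  have MD: "M \<in> D" "rtop M = rtop P" using TCC_sub[OF P M(1)] by auto
  from adj_cases[OF M(2)] show ?thesis
  proof
    assume "rtop N = rtop M"
    then have "N \<in> TCC D P" using TCC_ext[OF P M(1) N(1) M(2)] MD by simp
    then show ?thesis using N by simp
  next
    assume "\<exists>a b r. M = a#b#r \<and> N = b#a#r"
    then obtain a b r where "M = a#b#r" "N = b#a#r" by blast
    then show ?thesis using MD N unfolding edge_def by auto
  qed
qed

lemma deg2: assumes c: "c \<in> A" shows "\<exists>y d. y \<noteq> d \<and> edge D c y \<and> edge D c d"
proof -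
  obtain P where P: "P \<in> D" "rtop P = c" using ex_pref[OF c] by blast
  then obtain P' P'' where "neighbour D (TCC D P) P'" "neighbour D (TCC D P) P''" "rtop P' \<noteq> rtop P''"
    using ctn by (auto simp: connected_two_neighbours_def)
  then show ?thesis using nb_edge[OF P(1)] P(2) by blast
qed

lemma conn_closed:
  assumes a0: "a0 \<in> A" "a0 \<in> S" and cl: "\<And>a b. a \<in> S \<Longrightarrow> edge D a b \<Longrightarrow> b \<in> S" and b: "b \<in> A"
  shows "b \<in> S"
proof -
  obtain P where P: "P \<in> D" "rtop P = a0" using ex_pref[OF a0(1)] by blast
  obtain P' where P': "P' \<in> D" "rtop P' = b" using ex_pref[OF b] by blast
  have "connected_dom D" using ctn by (simp add: connected_two_neighbours_def)
  then obtain ps where ps: "is_path D ps" "hd ps = P" "last ps = P'"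
    using P(1) P'(1) unfolding connected_dom_def by blast
  have ne: "ps \<noteq> []" using ps(1) by (simp add: is_path_def)
  have "rtop (ps ! i) \<in> S" if "i < length ps" for i
    using that
  proof (induction i)
    case 0 then show ?case using ps(2) ne P a0 by (simp add: hd_conv_nth[symmetric])
  next
    case (Suc i)
    then have IH: "rtop (ps ! i) \<in> S" by simp
    have adj: "adjacent (ps ! i) (ps ! Suc i)" using ps(1) Suc.prems by (simp add: is_path_def)
    have "ps ! i \<in> set ps" "ps ! Suc i \<in> set ps" using Suc.prems by auto
    then have inD1: "ps ! i \<in> D" "ps ! Suc i \<in> D" using ps(1) by (auto simp: is_path_def)
    from adj_cases[OF adj] show ?case
    proof
      assume "rtop (ps ! Suc i) = rtop (ps ! i)" then show ?thesis using IH by simp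
    next
      assume "\<exists>a b r. ps ! i = a#b#r \<and> ps ! Suc i = b#a#r"
      then obtain a b r where ab: "ps ! i = a#b#r" "ps ! Suc i = b#a#r" by blast
      then have "edge D a b" using inD1 unfolding edge_def by auto
      then show ?thesis using cl IH ab by simp
    qed
  qed
  then have "rtop (last ps) \<in> S" using ne by (simp add: last_conv_nth)
  then show ?thesis using ps(3) P' by simp
qed

end


context tv
begin
lemma W12e: "edge D a b \<Longrightarrow> W1 D f a b \<or> W2 D f a b"
  unfolding edge_def using W12 by blast

lemma contra_le:
  assumes e: "edge D a b" and w2: "W2 D f b a" and le: "le1 D f a b"
  shows False
proof -
  obtain r where r: "a#b#r \<in> D" "b#a#r \<in> D" using e by (auto simp: edge_def)
  let ?T = "a#b#r" and ?W = "b#a#r"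
  have "f ?W ?T = a" using w2 r by (auto simp: W2_def)
  moreover have "f ?T ?T = a" using unan[OF r(1) r(1)] by simp
  then obtain W' where "W' \<in> D" "f W' ?T = b" using le r(1) unfolding le1_def by blast
  then have "f ?W ?T = b" using os1[OF r(2) r(1)] by simp
  ultimately show False using edge_in[OF e] by simp
qed

lemma no_beat:
  assumes e: "edge D p q" and w1: "W1 D f p q" and w2: "W2 D f q p"
  shows False
proof -
  define beat where "beat x y \<longleftrightarrow> edge D x y \<and> W1 D f x y \<and> W2 D f y x" for x y
  have step: "beat y z" if b: "beat x y" and e2: "edge D y z" and zx: "z \<noteq> x" for x y z
  proof -
    obtain r where r: "x#y#r \<in> D" "y#x#r \<in> D" using b by (auto simp: beat_def edge_def)
    obtain r' where r': "y#z#r' \<in> D" "z#y#r' \<in> D" using e2 by (auto simp: edge_def)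
    have "W1 D f y z"
    proof -
      have "\<not> W2 D f y z" using E1[OF r(1) r(2) r'(1)] zx b by (auto simp: beat_def)
      then show ?thesis using W12e[OF e2] by blast
    qed
    moreover have "W2 D f z y"
    proof -
      have "\<not> W1 D f z y" using E1[OF r'(2) r'(1) r(2)] zx b by (auto simp: beat_def)
      then show ?thesis using W12e[OF edge_sym[OF e2]] by blast
    qed
    ultimately show ?thesis using e2 by (simp add: beat_def)
  qed
  have nxt: "\<exists>z. edge D y z \<and> z \<noteq> x" if "y \<in> A" for x y
    using deg2[OF that] by blast
  define g where "g = (\<lambda>(x::'a, y::'a). (y, SOME z. edge D y z \<and> z \<noteq> x))"
  define s where "s n = (g ^^ n) (p, q)" for n
  have s_suc: "s (Suc n) = g (s n)" for n by (simp add: s_def)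
  have inv: "beat (fst (s n)) (snd (s n))" for n
  proof (induction n)
    case 0 show ?case using e w1 w2 by (simp add: s_def beat_def)
  next
    case (Suc n)
    obtain x y where xy: "s n = (x,y)" by (cases "s n")
    with Suc have b: "beat x y" by simp
    then have "y \<in> A" using edge_in by (auto simp: beat_def)
    then obtain z where "edge D y z \<and> z \<noteq> x" using nxt by blast
    then have z0: "edge D y (SOME z. edge D y z \<and> z \<noteq> x) \<and> (SOME z. edge D y z \<and> z \<noteq> x) \<noteq> x"
      by (rule someI)
    have "s (Suc n) = (y, SOME z. edge D y z \<and> z \<noteq> x)" using xy by (simp add: s_suc g_def)
    then show ?case using step[OF b] z0 by simp
  qed
  define v where "v n = fst (s n)" for n
  have sv: "snd (s n) = v (Suc n)" for n
    by (cases "s n") (simp add: v_def s_suc g_def)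
  have bv: "beat (v n) (v (Suc n))" for n using inv[of n] sv by (simp add: v_def)
  have vA: "v n \<in> A" for n using bv[of n] edge_in by (auto simp: beat_def)
  have le: "le1 D f (v (Suc n)) (v n)" for n
  proof -
    obtain r where r: "v n # v (Suc n) # r \<in> D" "v (Suc n) # v n # r \<in> D"
      using bv[of n] by (auto simp: beat_def edge_def)
    then show ?thesis using lemG bv[of n] by (auto simp: beat_def)
  qed
  have chain: "le1 D f (v (k + m)) (v k)" for k m
  proof (induction m)
    case 0 then show ?case by (simp add: le1_def)
  next
    case (Suc m)
    then show ?case using le[of "k + m"] by (simp add: le1_def)
  qed
  have "\<not> inj v"
  proof
    assume "inj v"
    moreover have "finite (range v)" using vA fin by (meson finite_subset image_subsetI)
    ultimately have "finite (UNIV :: nat set)" using finite_imageD by blast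
    then show False by simp
  qed
  then obtain i j where ij: "i \<noteq> j" "v i = v j" unfolding inj_def by blast
  obtain i j where ij2: "i < j" "v i = v j"
  proof (cases "i < j")
    case True then show ?thesis using that ij by blast
  next
    case False then show ?thesis using that[of j i] ij by auto
  qed
  have "le1 D f (v i) (v (Suc i))"
    using chain[of "Suc i" "j - Suc i"] ij2 by simp
  then show False using contra_le bv[of i] by (auto simp: beat_def)
qed

lemma sym1: "edge D p q \<Longrightarrow> W1 D f p q \<Longrightarrow> W1 D f q p"
  using W12e[OF edge_sym] no_beat by blast

lemma allout:
  assumes e: "edge D y c" and w: "W1 D f y c" and e2: "edge D c d"
  shows "W1 D f c d"
proof (cases "d = y")
  case True then show ?thesis using sym1[OF e w] by simp
next
  case False
  obtain r where r: "y#c#r \<in> D" "c#y#r \<in> D" using e by (auto simp: edge_def)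
  obtain r' where r': "c#d#r' \<in> D" using e2 by (auto simp: edge_def)
  have "\<not> W2 D f c d" using E1[OF r(1) r(2) r'] False w by auto
  then show ?thesis using W12e[OF e2] by blast
qed

lemma dict1:
  assumes ex: "\<exists>p q. edge D p q \<and> W1 D f p q"
  shows "\<forall>W\<in>D. \<forall>T\<in>D. f W T = rtop W"
proof -
  obtain p q where pq: "edge D p q" "W1 D f p q" using ex by blast
  let ?K = "{c. \<forall>d. edge D c d \<longrightarrow> W1 D f c d}"
  have qK: "q \<in> ?K" using allout[OF pq] by blast
  have allK: "c \<in> ?K" if "c \<in> A" for c
    using conn_closed[of q ?K c] qK edge_in[OF pq(1)] that allout by blast
  have le_e: "le1 D f a b" if eab: "edge D a b" for a b
  proof -
    obtain r where r: "b#a#r \<in> D" "a#b#r \<in> D" using edge_sym[OF eab] by (auto simp: edge_def)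
    have "W1 D f b a" using allK edge_in[OF eab] edge_sym[OF eab] by blast
    then show ?thesis using lemG[OF r] by simp
  qed
  have allle: "le1 D f b c" if "b \<in> A" "c \<in> A" for b c
  proof -
    have "c \<in> {x. le1 D f b x}"
    proof (rule conn_closed[of b])
      show "b \<in> A" by fact
      show "b \<in> {x. le1 D f b x}" by (simp add: le1_def)
      show "c \<in> A" by fact
      fix a x assume "a \<in> {x. le1 D f b x}" "edge D a x"
      then show "x \<in> {x. le1 D f b x}" using le_e[of a x] by (auto simp: le1_def)
    qed
    then show ?thesis by simp
  qed
  show ?thesis
  proof (intro ballI)
    fix W T assume W: "W \<in> D" and T: "T \<in> D"
    have "f T T = rtop T" using unan[OF T T] by simp
    then have "\<exists>W'\<in>D. f W' T = rtop W"
      using allle[OF rtop_in[OF T] rtop_in[OF W]] T unfolding le1_def by blast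
    then show "f W T = rtop W" using os1[OF W T] by blast
  qed
qed

end


lemma tv_flip: assumes T: "tv A D f" shows "tv A D (\<lambda>x y. f y x)"
proof -
  interpret tv A D f by (rule T)
  show ?thesis
  proof (rule tv.intro)
    show "domain A D" by (rule dom)
    show "minimally_rich A D" by (rule mr)
    show "connected_two_neighbours D" by (rule ctn)
    show "finite A" by (rule fin)
    show "A \<noteq> {}" by (rule ne)
    show "\<forall>P1\<in>D. \<forall>P2\<in>D. f P2 P1 \<in> A" using f_in by blast
    show "unanimous D (\<lambda>x y. f y x)" unfolding unanimous_def using unan by auto
    show "strategy_proof D (\<lambda>x y. f y x)" unfolding strategy_proof_def
      using spv1 spv2 by blast
  qed
qed

lemma W1_flip: "W1 D (\<lambda>x y. f y x) a b \<longleftrightarrow> W2 D f b a"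
  unfolding W1_def W2_def by auto


theorem proposition2:
  fixes A :: "'a set" and D :: "'a list set" and f :: "'a list \<Rightarrow> 'a list \<Rightarrow> 'a"
  assumes "finite A" and "card A \<ge> 3"
    and "domain A D"
    and "minimally_rich A D"
    and "connected_two_neighbours D"
    and "\<forall>P1\<in>D. \<forall>P2\<in>D. f P1 P2 \<in> A"
    and "unanimous D f"
    and "strategy_proof D f"
  shows "dictatorship D f"
proof -
  have ne: "A \<noteq> {}"
  proof
    assume "A = {}"
    then show False using assms(2) by simp
  qed
  have T: "tv A D f"
    by (rule tv.intro[OF assms(3) assms(4) assms(5) assms(1) ne assms(6) assms(7) assms(8)])
  interpret tv A D f by (rule T)
  show ?thesis
  proof (cases "\<exists>p q. edge D p q \<and> W1 D f p q")
    case True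
    then have "\<forall>W\<in>D. \<forall>T\<in>D. f W T = rtop W" by (rule dict1)
    then show ?thesis unfolding dictatorship_def by (rule disjI1)
  next
    case False
    interpret F: tv A D "\<lambda>x y. f y x" by (rule tv_flip[OF T])
    obtain c where c: "c \<in> A" using ne by blast
    obtain y d where cd: "edge D c d" using deg2[OF c] by blast
    have "W1 D f d c \<or> W2 D f d c" by (rule W12e[OF edge_sym[OF cd]])
    moreover have "\<not> W1 D f d c" using False edge_sym[OF cd] by blast
    ultimately have "W2 D f d c" by blast
    then have "W1 D (\<lambda>x y. f y x) c d" by (simp add: W1_flip)
    then have "\<exists>p q. edge D p q \<and> W1 D (\<lambda>x y. f y x) p q" using cd by blast
    then have "\<forall>W\<in>D. \<forall>T\<in>D. f T W = rtop W" using F.dict1 by simp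
    then show ?thesis unfolding dictatorship_def by blast
  qed
qed

end
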